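(* Let $\mathcal{H}$ be a complex Hilbert space of finite dimension $n\ge 2$, let $\mathcal{B}(\mathcal{H})_{\mathrm{sa}}$ be the real vector space of selfadjoint operators on $\mathcal{H}$, and for $k\in\mathbb{N}$ let $\mathcal{P}_k(\mathcal{H})$ denote the set of orthogonal projections on $\mathcal{H}$ of rank $k$. Let $k<n$ and let $\mathcal{L}\colon\mathcal{B}(\mathcal{H})_{\mathrm{sa}}\to\mathcal{B}(\mathcal{H})_{\mathrm{sa}}$ be a linear map with $\mathcal{L}(\mathcal{P}_k(\mathcal{H}))=\mathcal{P}_k(\mathcal{H})$. Then $\mathcal{L}$ maps $\mathcal{B}(\mathcal{H})_{\mathrm{sa}}$ bijectively onto itself. *)

theory Defs
  imports "HOL-Analysis.Analysis"
begin

text \<open>Operators on the n-dimensional complex Hilbert space C^n are represented by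
  their matrices w.r.t. the standard orthonormal basis.\<close>

definition cadjoint :: "complex^'n^'n \<Rightarrow> complex^'n^'n" where
  "cadjoint A = (\<chi> i j. cnj (A $ j $ i))"

definition selfadjoints :: "(complex^'n^'n) set" where
  "selfadjoints = {A. cadjoint A = A}"

definition projections_rank :: "nat \<Rightarrow> (complex^'n^'n) set" where
  "projections_rank k = {P. cadjoint P = P \<and> P ** P = P \<and> rank P = k}"

end

theory Submission
  imports Defs
begin


definition cproj :: "(complex^'n) set \<Rightarrow> complex^'n^'n" where
  "cproj W = (\<chi> i j. \<Sum>w\<in>W. cnj (w$i) * w$j)"

definition onset :: "(complex^'n) set \<Rightarrow> bool" where
  "onset W \<longleftrightarrow> (\<forall>u\<in>W. \<forall>w\<in>W. (\<Sum>m\<in>UNIV. cnj (u$m) * w$m) = (if u = w then 1 else 0))"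

lemma cproj_sa: "cadjoint (cproj W) = cproj W"
  by (simp add: cadjoint_def cproj_def vec_eq_iff cnj_sum mult.commute)

lemma cproj_idem:
  assumes "finite W" "onset W"
  shows "cproj W ** cproj W = cproj W"
proof -
  have "(\<Sum>m\<in>UNIV. (\<Sum>w\<in>W. cnj (w$i) * w$m) * (\<Sum>u\<in>W. cnj (u$m) * u$j))
      = (\<Sum>w\<in>W. cnj (w$i) * w$j)" for i j
  proof -
    have "(\<Sum>m\<in>UNIV. (\<Sum>w\<in>W. cnj (w$i) * w$m) * (\<Sum>u\<in>W. cnj (u$m) * u$j))
       = (\<Sum>w\<in>W. \<Sum>u\<in>W. cnj (w$i) * u$j * (\<Sum>m\<in>UNIV. cnj (u$m) * w$m))"
      by (simp add: sum_distrib_left sum_distrib_right sum.swap[of _ UNIV] mult.commute mult.left_commute)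
         (subst sum.swap, simp add: mult.commute mult.left_commute)
    also have "\<dots> = (\<Sum>w\<in>W. \<Sum>u\<in>W. cnj (w$i) * u$j * (if u = w then 1 else 0))"
      using assms(2) unfolding onset_def by (intro sum.cong refl) auto
    also have "\<dots> = (\<Sum>w\<in>W. cnj (w$i) * w$j)"
      using assms(1) by (simp add: if_distrib cong: if_cong)
    finally show ?thesis .
  qed
  then show ?thesis by (simp add: cproj_def matrix_matrix_mult_def vec_eq_iff)
qed

lemma onset_indep:
  assumes "finite W" "onset W"
  shows "vec.independent W"
proof -
  have "\<not> vec.dependent W"
  proof
    assume "vec.dependent W"
    then obtain c v where v: "v \<in> W" "c v \<noteq> 0" and s: "(\<Sum>w\<in>W. c w *s w) = 0"
      using vec.dependent_finite[OF assms(1)] by blast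
    have "0 = (\<Sum>m\<in>UNIV. cnj (v$m) * (\<Sum>w\<in>W. c w *s w)$m)" by (simp add: s)
    also have "\<dots> = (\<Sum>w\<in>W. c w * (\<Sum>m\<in>UNIV. cnj (v$m) * w$m))"
      by (simp add: sum_component sum_distrib_left sum_distrib_right mult.left_commute)
         (rule sum.swap)
    also have "\<dots> = (\<Sum>w\<in>W. c w * (if v = w then 1 else 0))"
      using assms(2) v(1) unfolding onset_def by (intro sum.cong refl) auto
    also have "\<dots> = c v" using assms(1) v(1) by (simp add: if_distrib cong: if_cong)
    finally show False using v(2) by simp
  qed
  then show ?thesis by simp
qed

lemma cproj_rank:
  assumes "finite W" "onset W"
  shows "rank (cproj W) = card W"
proof -
  have row: "row i (cproj W) = (\<Sum>w\<in>W. cnj (w$i) *s w)" for i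
    by (simp add: row_def cproj_def vec_eq_iff sum_component)
  have 1: "rows (cproj W) \<subseteq> vec.span W"
    unfolding rows_def row
    by (auto intro!: vec.span_sum vec.span_scale simp: vec.span_base)
  have 2: "W \<subseteq> vec.span (rows (cproj W))"
  proof
    fix v assume v: "v \<in> W"
    have "v = (\<Sum>i\<in>UNIV. (v$i) *s row i (cproj W))"
    proof -
      have "(\<Sum>i\<in>UNIV. v$i * (\<Sum>w\<in>W. cnj (w$i) * w$j)) = (\<Sum>w\<in>W. w$j * (\<Sum>i\<in>UNIV. cnj (w$i) * v$i))" for j
        by (simp add: sum_distrib_left sum_distrib_right mult.left_commute mult.commute)
           (rule sum.swap)
      also have "(\<Sum>w\<in>W. w$j * (\<Sum>i\<in>UNIV. cnj (w$i) * v$i)) = (\<Sum>w\<in>W. w$j * (if w = v then 1 else 0))" for j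
        using assms(2) v unfolding onset_def by (intro sum.cong refl) auto
      also have "(\<Sum>w\<in>W. w$j * (if w = v then 1 else 0)) = v$j" for j
        using assms(1) v by (simp add: if_distrib cong: if_cong)
      finally show ?thesis
        by (simp add: vec_eq_iff sum_component row_def cproj_def)
    qed
    also have "\<dots> \<in> vec.span (rows (cproj W))"
      by (intro vec.span_sum vec.span_scale vec.span_base) (auto simp: rows_def)
    finally show "v \<in> vec.span (rows (cproj W))" .
  qed
  have "rank (cproj W) = vec.dim (rows (cproj W))" by (simp add: row_rank_def_gen)
  also have "\<dots> = vec.dim W" using 1 2 by (intro vec.span_eq_dim) (simp add: vec.span_eq)
  also have "\<dots> = card W" using onset_indep[OF assms] by (rule vec.dim_eq_card_independent)
  finally show ?thesis .
qed

lemma cproj_in: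
  assumes "finite W" "onset W" "card W = k"
  shows "cproj W \<in> projections_rank k"
  using assms cproj_sa cproj_idem cproj_rank unfolding projections_rank_def by auto

definition E :: "'n \<Rightarrow> 'n \<Rightarrow> complex^'n^'n" where
  "E i j = (\<chi> p q. if p = i \<and> q = j then 1 else 0)"

abbreviation e :: "'n \<Rightarrow> complex^'n" where "e i \<equiv> axis i 1"

lemma inner_e: "(\<Sum>m\<in>UNIV. cnj (e a $ m) * w $ m) = w $ a"
proof -
  have "(\<Sum>m\<in>UNIV. cnj (e a $ m) * w $ m) = (\<Sum>m\<in>UNIV. if m = a then w $ m else 0)"
    by (intro sum.cong) (auto simp: axis_def)
  then show ?thesis by simp
qed

lemma e_eq_iff: "e a = e b \<longleftrightarrow> a = b"
  by (simp add: axis_eq_axis)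

lemma onset_e: "onset (e ` X)"
proof -
  have "(\<Sum>m\<in>UNIV. cnj (e a $ m) * e b $ m) = (if e a = e b then 1 else 0)" for a b
    unfolding inner_e e_eq_iff by (simp add: axis_def)
  then show ?thesis unfolding onset_def by blast
qed

lemma card_e: "card (e ` X) = card X"
  by (rule card_image) (simp add: inj_on_def e_eq_iff)

lemma onset_insert:
  assumes "onset W" "(\<Sum>m\<in>UNIV. cnj (w$m) * w$m) = 1"
    "\<And>u. u \<in> W \<Longrightarrow> (\<Sum>m\<in>UNIV. cnj (u$m) * w$m) = 0" "w \<notin> W"
  shows "onset (insert w W)"
proof -
  have "(\<Sum>m\<in>UNIV. cnj (w$m) * u$m) = 0" if "u \<in> W" for u
  proof -
    have "(\<Sum>m\<in>UNIV. cnj (w$m) * u$m) = cnj (\<Sum>m\<in>UNIV. cnj (u$m) * w$m)"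
      by (simp add: cnj_sum mult.commute)
    then show ?thesis using assms(3)[OF that] by simp
  qed
  then show ?thesis using assms unfolding onset_def by auto
qed

lemma cproj_union:
  assumes "finite A" "finite B" "A \<inter> B = {}"
  shows "cproj (A \<union> B) = cproj A + cproj B"
  using assms by (simp add: cproj_def vec_eq_iff sum.union_disjoint)

lemma cproj_e: "cproj (e ` X) = (\<Sum>t\<in>X. E t t)"
proof -
  have "(\<Sum>w\<in>e ` X. cnj (w $ p) * w $ q) = (\<Sum>t\<in>X. cnj (e t $ p) * e t $ q)" for p q
    by (rule sum.reindex_cong[where l=e]) (auto simp: inj_on_def e_eq_iff)
  moreover have "(\<Sum>t\<in>X. cnj (e t $ p) * e t $ q) = (\<Sum>t\<in>X. E t t $ p $ q)" for p q
    by (intro sum.cong) (auto simp: E_def axis_def)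
  ultimately show ?thesis
    by (simp add: cproj_def vec_eq_iff sum_component)
qed

definition ip :: "complex^'n \<Rightarrow> complex^'n \<Rightarrow> complex" where
  "ip u w = (\<Sum>m\<in>UNIV. cnj (u$m) * w$m)"

lemma ip_scale_left: "ip (a *s u) w = cnj a * ip u w"
  by (simp add: ip_def sum_distrib_left mult.assoc)
lemma ip_add_left: "ip (u + v) w = ip u w + ip v w"
  by (simp add: ip_def sum.distrib distrib_right)
lemma ip_e: "ip (e a) w = w $ a"
  unfolding ip_def by (rule inner_e)

lemma exists_T:
  fixes i j :: "'n::finite"
  assumes "k < CARD('n)" "i \<noteq> j" "1 \<le> k"
  shows "\<exists>T. card T = k - 1 \<and> i \<notin> T \<and> j \<notin> T"
proof -
  have "card (UNIV - {i, j}) = CARD('n) - 2"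
    using assms(2) by (simp add: card_Diff_subset)
  then have "k - 1 \<le> card (UNIV - {i, j})" using assms by simp
  then obtain T where "T \<subseteq> UNIV - {i,j}" "card T = k - 1"
    using obtain_subset_with_card_n by metis
  then show ?thesis by blast
qed

lemma diag_in: "(\<Sum>t\<in>X. E t t) \<in> projections_rank (card X)"
  using cproj_in[of "e ` X" "card X"] by (simp add: onset_e card_e cproj_e)

lemma Ediff_in:
  fixes i j :: "'n::finite"
  assumes "k < CARD('n)" "i \<noteq> j" "1 \<le> k"
  shows "E i i - E j j \<in> span (projections_rank k)"
proof -
  obtain T where T: "card T = k - 1" "i \<notin> T" "j \<notin> T" using exists_T[OF assms] by blast
  have k: "card (insert i T) = k" "card (insert j T) = k" using T assms(3) by auto
  have "(\<Sum>t\<in>insert i T. E t t) - (\<Sum>t\<in>insert j T. E t t) \<in> span (projections_rank k)"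
    using diag_in[of "insert i T"] diag_in[of "insert j T"] k
    by (intro span_diff span_base) auto
  then show ?thesis using T by simp
qed

lemma Eii_in:
  fixes i :: "'n::finite"
  assumes "CARD('n) \<ge> 2" "k < CARD('n)" "1 \<le> k"
  shows "E i i \<in> span (projections_rank k)"
proof -
  obtain j :: 'n where j: "j \<noteq> i"
  proof -
    have "card (UNIV::'n set) \<noteq> card {i}" using assms(1) by simp
    then have "UNIV \<noteq> {i}" by metis
    then show ?thesis using that by blast
  qed
  obtain T where T: "card T = k - 1" "i \<notin> T" "j \<notin> T" using exists_T[OF assms(2) j[symmetric] assms(3)] by blast
  have k: "card (insert i T) = k" using T assms(3) by auto
  have 1: "(\<Sum>t\<in>insert i T. E t t) \<in> span (projections_rank k)"
    using diag_in[of "insert i T"] k by (intro span_base) auto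
  have 2: "(\<Sum>t\<in>T. E t t - E i i) \<in> span (projections_rank k)"
    using T by (intro span_sum Ediff_in assms) auto
  have "(\<Sum>t\<in>insert i T. E t t) - (\<Sum>t\<in>T. E t t - E i i) = real k *\<^sub>R E i i"
  proof -
    have "(\<Sum>t\<in>insert i T. E t t) - (\<Sum>t\<in>T. E t t - E i i) = E i i + real (card T) *\<^sub>R E i i"
    proof -
      have "(\<Sum>t\<in>T. E t t - E i i) = (\<Sum>t\<in>T. E t t) - (\<Sum>t\<in>T. E i i)"
        by (rule sum_subtractf)
      also have "(\<Sum>t\<in>T. E i i) = real (card T) *\<^sub>R E i i"
        by (rule sum_constant_scaleR)
      finally show ?thesis using T by simp
    qed
    also have "\<dots> = real k *\<^sub>R E i i" using T assms(3)
      by (simp add: of_nat_diff algebra_simps)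
    finally show ?thesis .
  qed
  then have "real k *\<^sub>R E i i \<in> span (projections_rank k)"
    using span_diff[OF 1 2] by simp
  then have "inverse (real k) *\<^sub>R (real k *\<^sub>R E i i) \<in> span (projections_rank k)"
    by (rule span_scale)
  then show ?thesis using assms(3) by simp
qed

lemma offdiag_aux:
  fixes i j :: "'n::finite" and w :: "complex^'n"
  assumes "CARD('n) \<ge> 2" "k < CARD('n)" "1 \<le> k" "i \<noteq> j"
    and w1: "ip w w = 1" and w0: "\<And>t. t \<noteq> i \<Longrightarrow> t \<noteq> j \<Longrightarrow> w $ t = 0"
  shows "cproj {w} \<in> span (projections_rank k)"
proof -
  obtain T where T: "card T = k - 1" "i \<notin> T" "j \<notin> T" using exists_T[OF assms(2,4,3)] by blast
  have fin: "finite T" by simp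
  have nin: "w \<notin> e ` T"
  proof
    assume "w \<in> e ` T"
    then obtain t where "t \<in> T" "w = e t" by auto
    then show False using w0[of t] T by (auto simp: axis_def)
  qed
  have on: "onset (insert w (e ` T))"
    using onset_e nin w1 w0 T unfolding ip_def
    by (intro onset_insert) (auto simp: inner_e, metis w0)
  have c: "card (insert w (e ` T)) = k"
    using nin T assms(3) by (simp add: card_e)
  have "cproj (insert w (e ` T)) \<in> projections_rank k"
    using cproj_in[OF _ on c] by simp
  moreover have "cproj (insert w (e ` T)) = cproj {w} + (\<Sum>t\<in>T. E t t)"
    using cproj_union[of "{w}" "e ` T"] nin by (simp add: cproj_e)
  moreover have "(\<Sum>t\<in>T. E t t) \<in> span (projections_rank k)"
    by (intro span_sum Eii_in assms)
  ultimately have "(cproj {w} + (\<Sum>t\<in>T. E t t)) - (\<Sum>t\<in>T. E t t) \<in> span (projections_rank k)"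
    by (metis span_base span_diff)
  then show ?thesis by simp
qed

definition S :: "'n \<Rightarrow> 'n \<Rightarrow> complex^'n^'n" where
  "S i j = (\<chi> p q. (if p = i \<and> q = j then 1/2 else 0) + (if p = j \<and> q = i then 1/2 else 0))"
definition K :: "'n \<Rightarrow> 'n \<Rightarrow> complex^'n^'n" where
  "K i j = (\<chi> p q. (if p = i \<and> q = j then \<i>/2 else 0) - (if p = j \<and> q = i then \<i>/2 else 0))"

definition cc :: complex where "cc = complex_of_real (inverse (sqrt 2))"
lemma cc_cnj[simp]: "cnj cc = cc" by (simp add: cc_def)
lemma cc_sq[simp]: "cc * cc = 1/2"
proof -
  have "cc * cc = complex_of_real (inverse (sqrt 2) * inverse (sqrt 2))" by (simp add: cc_def)
  also have "inverse (sqrt 2) * inverse (sqrt 2) = (1/2::real)"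
    by (simp flip: inverse_mult_distrib)
  finally show ?thesis by simp
qed

lemma cc2b: "cc * (cc * 2) = 1"
proof -
  have "cc * (cc * 2) = (cc * cc) * 2" by (rule mult.assoc[symmetric])
  also have "\<dots> = 1" by simp
  finally show ?thesis .
qed
lemma cc2: "cc * 2 * cc = 1" "cc * (cc * 2) = 1"
  using cc2b by (metis mult.commute mult.left_commute)+

lemma half2: "(1/2::real) *\<^sub>R (2::complex) = 1" "(1/2::real) *\<^sub>R (1::complex) = 1/2"
  by (simp_all add: scaleR_conv_of_real)

lemma cc4: "cc * \<i> * cc * \<i> = - 1/2"
proof -
  have "cc * \<i> * cc * \<i> = (cc * cc) * (\<i> * \<i>)" by (simp only: algebra_simps)
  then show ?thesis by simp
qed

lemma cc3: "cc * (cc - \<i> * cc * \<i>) = 1"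
  by (simp add: algebra_simps cc2b)

lemma cproj_single: "cproj {w} = (\<chi> p q. cnj (w $ p) * w $ q)"
  by (simp add: cproj_def)

lemma S_in:
  fixes i j :: "'n::finite"
  assumes "CARD('n) \<ge> 2" "k < CARD('n)" "1 \<le> k"
  shows "S i j \<in> span (projections_rank k)"
proof (cases "i = j")
  case True
  then have "S i j = E i i" by (simp add: S_def E_def vec_eq_iff)
  then show ?thesis using Eii_in[OF assms] by simp
next
  case False
  define w where "w = cc *s (e i + e j)"
  have ww: "ip w w = 1"
    using False unfolding w_def ip_scale_left ip_add_left ip_e
    by (simp add: axis_def distrib_left distrib_right mult.assoc[symmetric] cc2 cc3)
  have "cproj {w} \<in> span (projections_rank k)"
    using False by (intro offdiag_aux[OF assms False ww]) (simp add: w_def axis_def)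
  moreover have "cproj {w} = (1/2) *\<^sub>R (E i i + E j j) + S i j"
    using False by (auto simp: cproj_single vec_eq_iff w_def axis_def E_def S_def
        distrib_left distrib_right mult.assoc[symmetric] half2 cc4)
  moreover have "(1/2) *\<^sub>R (E i i + E j j) \<in> span (projections_rank k)"
    by (intro span_scale span_add Eii_in[OF assms])
  ultimately have "cproj {w} - (1/2) *\<^sub>R (E i i + E j j) \<in> span (projections_rank k)"
    by (intro span_diff)
  then show ?thesis by (simp add: \<open>cproj {w} = _\<close>)
qed

lemma K_in:
  fixes i j :: "'n::finite"
  assumes "CARD('n) \<ge> 2" "k < CARD('n)" "1 \<le> k"
  shows "K i j \<in> span (projections_rank k)"
proof (cases "i = j")
  case True
  then have "K i j = 0" by (simp add: K_def vec_eq_iff)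
  then show ?thesis by (simp add: span_zero)
next
  case False
  define w where "w = cc *s (e i + \<i> *s e j)"
  have ww: "ip w w = 1"
    using False unfolding w_def ip_scale_left ip_add_left ip_e
    by (simp add: axis_def distrib_left distrib_right mult.assoc[symmetric] cc2 cc3)
  have "cproj {w} \<in> span (projections_rank k)"
    using False by (intro offdiag_aux[OF assms False ww]) (simp add: w_def axis_def)
  moreover have "cproj {w} = (1/2) *\<^sub>R (E i i + E j j) + K i j"
    using False by (auto simp: cproj_single vec_eq_iff w_def axis_def E_def K_def
        distrib_left distrib_right mult.assoc[symmetric] half2 cc4)
  moreover have "(1/2) *\<^sub>R (E i i + E j j) \<in> span (projections_rank k)"
    by (intro span_scale span_add Eii_in[OF assms])
  ultimately have "cproj {w} - (1/2) *\<^sub>R (E i i + E j j) \<in> span (projections_rank k)"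
    by (intro span_diff)
  then show ?thesis by (simp add: \<open>cproj {w} = _\<close>)
qed

lemma sum2_delta1: fixes p q :: "'n::finite" shows "(\<Sum>i\<in>UNIV. \<Sum>j\<in>UNIV. if p = i \<and> q = j then f i j else 0) = (f p q :: complex)"
proof -
  have "(\<Sum>i\<in>UNIV. \<Sum>j\<in>UNIV. if p = i \<and> q = j then f i j else 0) = (\<Sum>i\<in>UNIV. if p = i then f i q else 0)"
    by (intro sum.cong) (auto simp: if_distrib sum.delta' cong: if_cong)
  then show ?thesis by (simp add: sum.delta')
qed

lemma sum2_delta2: fixes p q :: "'n::finite" shows "(\<Sum>i\<in>UNIV. \<Sum>j\<in>UNIV. if p = j \<and> q = i then f i j else 0) = (f q p :: complex)"
proof -
  have "(\<Sum>i\<in>UNIV. \<Sum>j\<in>UNIV. if p = j \<and> q = i then f i j else 0) = (\<Sum>i\<in>UNIV. if q = i then f i p else 0)"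
    by (intro sum.cong) (auto simp: if_distrib sum.delta' cong: if_cong)
  then show ?thesis by (simp add: sum.delta')
qed

lemma ent_aux: "of_real x * ((if c1 then 1/2 else 0) + (if c2 then 1/2 else 0)) + of_real y * ((if c1 then \<i>/2 else 0) - (if c2 then \<i>/2 else 0))
  = (if c1 then of_real x / 2 + \<i> * of_real y / 2 else 0) + (if c2 then of_real x / 2 - \<i> * of_real y / 2 else (0::complex))"
  by (cases c1; cases c2) (simp_all add: field_simps)

lemma decomp:
  fixes A :: "complex^'n::finite^'n"
  assumes "cadjoint A = A"
  shows "A = (\<Sum>i\<in>UNIV. \<Sum>j\<in>UNIV. Re (A$i$j) *\<^sub>R S i j + Im (A$i$j) *\<^sub>R K i j)"
proof -
  have sym: "A$q$p = cnj (A$p$q)" for p q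
  proof -
    have "A$q$p = cadjoint A $ q $ p" using assms by simp
    also have "\<dots> = cnj (A$p$q)" by (simp add: cadjoint_def)
    finally show ?thesis .
  qed
  have ent: "(Re (A$i$j) *\<^sub>R S i j + Im (A$i$j) *\<^sub>R K i j) $ p $ q =
     (if p = i \<and> q = j then of_real (Re (A$i$j)) / 2 + \<i> * of_real (Im (A$i$j)) / 2 else 0)
   + (if p = j \<and> q = i then of_real (Re (A$i$j)) / 2 - \<i> * of_real (Im (A$i$j)) / 2 else 0)" for i j p q
  proof -
    have "(Re (A$i$j) *\<^sub>R S i j + Im (A$i$j) *\<^sub>R K i j) $ p $ q
       = Re (A$i$j) *\<^sub>R (S i j $ p $ q) + Im (A$i$j) *\<^sub>R (K i j $ p $ q)" by simp
    also have "\<dots> = of_real (Re (A$i$j)) * (S i j $ p $ q) + of_real (Im (A$i$j)) * (K i j $ p $ q)"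
      by (simp only: scaleR_conv_of_real)
    also have "\<dots> = (if p = i \<and> q = j then of_real (Re (A$i$j)) / 2 + \<i> * of_real (Im (A$i$j)) / 2 else 0)
   + (if p = j \<and> q = i then of_real (Re (A$i$j)) / 2 - \<i> * of_real (Im (A$i$j)) / 2 else 0)"
      unfolding S_def K_def vec_lambda_beta by (rule ent_aux)
    finally show ?thesis .
  qed
  have "(\<Sum>i\<in>UNIV. \<Sum>j\<in>UNIV. Re (A$i$j) *\<^sub>R S i j + Im (A$i$j) *\<^sub>R K i j) $ p $ q = A $ p $ q" for p q
  proof -
    have "(\<Sum>i\<in>UNIV. \<Sum>j\<in>UNIV. Re (A$i$j) *\<^sub>R S i j + Im (A$i$j) *\<^sub>R K i j) $ p $ q
      = (of_real (Re (A$p$q)) / 2 + \<i> * of_real (Im (A$p$q)) / 2)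
       + (of_real (Re (A$q$p)) / 2 - \<i> * of_real (Im (A$q$p)) / 2)"
      unfolding sum_component unfolding ent unfolding sum.distrib unfolding sum2_delta1 sum2_delta2 by (rule refl)
    also have "\<dots> = A $ p $ q"
      using sym[of p q] by (simp add: complex_eq_iff)
    finally show ?thesis .
  qed
  then show ?thesis by (simp add: vec_eq_iff)
qed

lemma sa_span:
  assumes "CARD('n::finite) \<ge> 2" "k < CARD('n)" "1 \<le> k"
  shows "(selfadjoints :: (complex^'n^'n) set) \<subseteq> span (projections_rank k)"
proof
  fix A :: "complex^'n^'n" assume "A \<in> selfadjoints"
  then have "A = (\<Sum>i\<in>UNIV. \<Sum>j\<in>UNIV. Re (A$i$j) *\<^sub>R S i j + Im (A$i$j) *\<^sub>R K i j)"
    by (intro decomp) (simp add: selfadjoints_def)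
  also have "\<dots> \<in> span (projections_rank k)"
    by (intro span_sum span_add span_scale S_in K_in assms)
  finally show "A \<in> span (projections_rank k)" .
qed


lemma cadj_add: "cadjoint (A + B) = cadjoint A + cadjoint B"
  by (simp add: cadjoint_def vec_eq_iff)
lemma cadj_diff: "cadjoint (A - B) = cadjoint A - cadjoint B"
  by (simp add: cadjoint_def vec_eq_iff)
lemma cadj_scaleR: "cadjoint (c *\<^sub>R A) = c *\<^sub>R cadjoint A"
  by (simp add: cadjoint_def vec_eq_iff)
lemma cadj_cadj: "cadjoint (cadjoint A) = A"
  by (simp add: cadjoint_def vec_eq_iff)
lemma cadj_zero: "cadjoint 0 = 0"
  by (simp add: cadjoint_def vec_eq_iff)

lemma subspace_sa: "subspace selfadjoints"
  by (auto simp: subspace_def selfadjoints_def cadj_add cadj_scaleR cadj_zero)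

theorem lemma2:
  fixes L :: "complex^'n^'n \<Rightarrow> complex^'n^'n" and k :: nat
  assumes "CARD('n) \<ge> 2"
    and "1 \<le> k" and "k < CARD('n)"
    and "L ` selfadjoints \<subseteq> selfadjoints"
    and "\<And>A B. A \<in> selfadjoints \<Longrightarrow> B \<in> selfadjoints \<Longrightarrow> L (A + B) = L A + L B"
    and "\<And>(c::real) A. A \<in> selfadjoints \<Longrightarrow> L (c *\<^sub>R A) = c *\<^sub>R L A"
    and "L ` projections_rank k = projections_rank k"
  shows "bij_betw L selfadjoints selfadjoints"
proof -
  note add = assms(5) and scl = assms(6)
  have L0: "L 0 = 0"
    using scl[of 0 0, OF subspace_0[OF subspace_sa]] by simp
  have sub: "subspace (L ` selfadjoints)"
    unfolding subspace_def
  proof (intro conjI ballI allI)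
    show "0 \<in> L ` selfadjoints" using L0 subspace_sa subspace_0 by (metis image_eqI)
  next
    fix x y assume "x \<in> L ` selfadjoints" "y \<in> L ` selfadjoints"
    then obtain a b where "a \<in> selfadjoints" "b \<in> selfadjoints" "x = L a" "y = L b" by auto
    then show "x + y \<in> L ` selfadjoints"
      using add subspace_sa subspace_add by (metis image_eqI)
  next
    fix c :: real and x assume "x \<in> L ` selfadjoints"
    then obtain a where "a \<in> selfadjoints" "x = L a" by auto
    then show "c *\<^sub>R x \<in> L ` selfadjoints"
      using scl subspace_sa subspace_scale by (metis image_eqI)
  qed
  have Psa: "(projections_rank k :: (complex^'n^'n) set) \<subseteq> selfadjoints"
    by (auto simp: projections_rank_def selfadjoints_def)
  have "(selfadjoints :: (complex^'n^'n) set) \<subseteq> span (projections_rank k)"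
    by (rule sa_span[OF assms(1,3,2)])
  also have "\<dots> = span (L ` projections_rank k)" using assms(7) by simp
  also have "\<dots> \<subseteq> L ` selfadjoints"
    using Psa sub by (intro span_minimal) auto
  finally have surjL: "L ` selfadjoints = selfadjoints" using assms(4) by auto
  define Hp where "Hp A = (1/2::real) *\<^sub>R (A + cadjoint A)" for A :: "complex^'n^'n"
  have Hpsa: "Hp A \<in> selfadjoints" for A
    by (simp add: Hp_def selfadjoints_def cadj_add cadj_scaleR cadj_cadj add.commute)
  have Hpid: "A \<in> selfadjoints \<Longrightarrow> Hp A = A" for A
    by (simp add: Hp_def selfadjoints_def scaleR_add_right[symmetric])
  define h where "h A = L (Hp A) + (A - Hp A)" for A
  have Hpadd: "Hp (x + y) = Hp x + Hp y" for x y
    by (simp add: Hp_def cadj_add algebra_simps)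
  have Hpscl: "Hp (c *\<^sub>R x) = c *\<^sub>R Hp x" for c x
    by (simp add: Hp_def cadj_scaleR algebra_simps)
  have lin: "linear h"
  proof (rule linearI)
    fix x y show "h (x + y) = h x + h y"
      unfolding h_def Hpadd using add[OF Hpsa Hpsa] by (simp add: algebra_simps)
  next
    fix c :: real and x show "h (c *\<^sub>R x) = c *\<^sub>R h x"
      unfolding h_def Hpscl using scl[OF Hpsa] by (simp add: algebra_simps)
  qed
  have "surj h"
  proof -
    have "B \<in> range h" for B
    proof -
      obtain X where X: "X \<in> selfadjoints" "L X = Hp B"
        using surjL Hpsa[of B] by (metis imageE)
      have "Hp (X + (B - Hp B)) = X"
        using X(1) Hpsa[of B] Hpadd[of X "B - Hp B"] Hpadd[of "B - Hp B" "Hp B"] Hpid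
        by (simp add: algebra_simps)
      then have "h (X + (B - Hp B)) = B" by (simp add: h_def X(2))
      then show ?thesis by (metis rangeI)
    qed
    then show ?thesis by blast
  qed
  then have "inj h" using lin by (simp add: linear_surjective_imp_injective)
  moreover have "h A = L A" if "A \<in> selfadjoints" for A
    using Hpid[OF that] by (simp add: h_def)
  ultimately have "inj_on L selfadjoints"
    by (metis inj_on_def injD)
  then show ?thesis using surjL by (simp add: bij_betw_def)
qed

end
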